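(* Fix $k>0$ and suppose $a_r(v,x)>0$ for all $v\in\mathbb{R}^m_{>0}$ and $x\in\mathbb{R}^n_{>0}$. Then for every $c_0$ such that $\omega_{c_0}\cap\mathbb{R}^n_{>0}\neq\emptyset$ and $\omega_{c_0}$ contains no boundary equilibria (i.e. $Nv(k,x)\ne0$ for every $x\in\omega_{c_0}$ having some zero coordinate), the equation $f(k,x)=Nv(k,x)=0$ has exactly one solution $x\in\omega_{c_0}$ (and it is positive).
   Context: Mass-action network with species $A_1,\dots,A_n$, reactions $\sum_{i}\alpha_{ij}A_i\xrightarrow{k_j}\sum_i\beta_{ij}A_i$ ($j=1,\dots,m$), nonnegative integer coefficients, rate constants $k>0$, rate functions $v_j(k,x)=k_j\prod_i x_i^{\alpha_{ij}}$, stoichiometric matrix $N_{ij}=\beta_{ij}-\alpha_{ij}$ of rank $r$, model $\dot x=Nv(k,x)=:f(k,x)$. Standing assumption: some $\lambda\in\mathbb{R}^n_{>0}$ satisfies $\lambda^TN=0$. $W\in\mathbb{R}^{n\times(n-r)}$ is full rank with columns spanning $\ker(N^T)$; $\omega_{c_0}=\{x\ge0: W^Tx=c_0\}$. $J(v,x)$ is the $n\times n$ matrix with $J_{il}=\sum_j N_{ij}\alpha_{lj}v_j/x_l$; it is assumed that $\mathrm{im}(J(v,x))=\mathrm{im}(N)$; $a_r(v,x)$ is the sum of all principal minors of order $r$ of $-J(v,x)$. *)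

theory Defs
  imports "HOL-Analysis.Analysis"
begin

text \<open>Species are indexed by a finite type 'n, reactions by a
finite type 'm. alpha$i$j and beta$i$j are the (nonnegative integer) stoichiometric
coefficients of species i in reactant / product complex of reaction j.\<close>

definition stoich :: "nat^'m^'n \<Rightarrow> nat^'m^'n \<Rightarrow> real^'m^'n" where
  "stoich alpha beta = (\<chi> i j. real (beta$i$j) - real (alpha$i$j))"

definition rate :: "nat^'m^'n \<Rightarrow> real^'m \<Rightarrow> real^'n \<Rightarrow> real^'m" where
  "rate alpha k x = (\<chi> j. k$j * (\<Prod>i\<in>UNIV. (x$i) ^ (alpha$i$j)))"

definition mafield :: "nat^'m^'n \<Rightarrow> nat^'m^'n \<Rightarrow> real^'m \<Rightarrow> real^'n \<Rightarrow> real^'n" where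
  "mafield alpha beta k x = stoich alpha beta *v rate alpha k x"

definition Jmat :: "nat^'m^'n \<Rightarrow> nat^'m^'n \<Rightarrow> real^'m \<Rightarrow> real^'n \<Rightarrow> real^'n^'n" where
  "Jmat alpha beta v x = (\<chi> i l. \<Sum>j\<in>UNIV. stoich alpha beta $i$j * real (alpha$l$j) * v$j / x$l)"

definition principal_minor :: "real^'n^'n \<Rightarrow> 'n set \<Rightarrow> real" where
  "principal_minor A S = (\<Sum>p | p permutes S. of_int (sign p) * (\<Prod>i\<in>S. A$i$(p i)))"

definition sum_principal_minors :: "real^'n^'n \<Rightarrow> nat \<Rightarrow> real" where
  "sum_principal_minors A r = (\<Sum>S | card S = r. principal_minor A S)"

definition a_coef :: "nat^'m^'n \<Rightarrow> nat^'m^'n \<Rightarrow> real^'m \<Rightarrow> real^'n \<Rightarrow> real" where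
  "a_coef alpha beta v x = sum_principal_minors (- Jmat alpha beta v x) (rank (stoich alpha beta))"

definition omega :: "real^'p^'n \<Rightarrow> real^'p \<Rightarrow> (real^'n) set" where
  "omega W c0 = {x. (\<forall>i. x$i \<ge> 0) \<and> transpose W *v x = c0}"

end

theory Submission
  imports Defs
begin


lemma det_expand:
  fixes A :: "real^'n^'n"
  shows "det (mat t + A) = (\<Sum>S\<in>Pow UNIV. t ^ (CARD('n) - card S) * principal_minor A S)"
proof -
  let ?P = "{p. p permutes (UNIV::'n set)}"
  have e: "(mat t + A)$i$(p i) = A$i$(p i) + (if i = p i then t else 0)" for i and p :: "'n \<Rightarrow> 'n"
    by (simp add: mat_def)
  have pr: "(\<Prod>i\<in>UNIV - S. (if i = p i then t else 0)) =
        (if \<forall>i\<in>UNIV - S. p i = i then t ^ (CARD('n) - card S) else 0)" for S and p :: "'n \<Rightarrow> 'n"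
  proof (cases "\<forall>i\<in>UNIV - S. p i = i")
    case True
    then have "(\<Prod>i\<in>UNIV - S. (if i = p i then t else 0)) = (\<Prod>i\<in>UNIV - S. t)"
      by (intro prod.cong) auto
    also have "\<dots> = t ^ (CARD('n) - card S)"
      by (simp add: card_Diff_subset)
    finally show ?thesis using True by simp
  next
    case False
    then obtain i where i: "i \<in> UNIV - S" "p i \<noteq> i" by auto
    have "(\<Prod>i\<in>UNIV - S. (if i = p i then t else 0)) = 0"
      apply (rule prod_zero) apply simp using i by force
    then show ?thesis by (simp only: if_not_P[OF False])
  qed
  have "det (mat t + A) = (\<Sum>p\<in>?P. of_int (sign p) * (\<Prod>i\<in>UNIV. A$i$(p i) + (if i = p i then t else 0)))"
    unfolding det_def e ..
  also have "\<dots> = (\<Sum>p\<in>?P. \<Sum>S\<in>Pow UNIV. of_int (sign p) * ((\<Prod>i\<in>S. A$i$(p i)) *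
       (if \<forall>i\<in>UNIV - S. p i = i then t ^ (CARD('n) - card S) else 0)))"
    by (simp add: prod_add pr sum_distrib_left)
  also have "\<dots> = (\<Sum>S\<in>Pow UNIV. \<Sum>p\<in>?P. of_int (sign p) * ((\<Prod>i\<in>S. A$i$(p i)) *
       (if \<forall>i\<in>UNIV - S. p i = i then t ^ (CARD('n) - card S) else 0)))"
    by (rule sum.swap)
  also have "\<dots> = (\<Sum>S\<in>Pow UNIV. t ^ (CARD('n) - card S) * principal_minor A S)"
  proof (rule sum.cong[OF refl])
    fix S :: "'n set"
    have eqs: "{p \<in> ?P. \<forall>i\<in>UNIV - S. p i = i} = {p. p permutes S}"
      by (auto intro: permutes_superset permutes_subset permutes_not_in)
    have "(\<Sum>p\<in>?P. of_int (sign p) * ((\<Prod>i\<in>S. A$i$(p i)) *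
       (if \<forall>i\<in>UNIV - S. p i = i then t ^ (CARD('n) - card S) else 0)))
       = (\<Sum>p\<in>?P. if \<forall>i\<in>UNIV - S. p i = i then t ^ (CARD('n) - card S) * (of_int (sign p) * (\<Prod>i\<in>S. A$i$(p i))) else 0)"
      by (intro sum.cong) auto
    also have "\<dots> = (\<Sum>p\<in>{p \<in> ?P. \<forall>i\<in>UNIV - S. p i = i}. t ^ (CARD('n) - card S) * (of_int (sign p) * (\<Prod>i\<in>S. A$i$(p i))))"
      by (rule sum.inter_filter[symmetric]) simp
    also have "\<dots> = t ^ (CARD('n) - card S) * principal_minor A S"
      unfolding eqs principal_minor_def by (simp add: sum_distrib_left)
    finally show "(\<Sum>p\<in>?P. of_int (sign p) * ((\<Prod>i\<in>S. A$i$(p i)) *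
       (if \<forall>i\<in>UNIV - S. p i = i then t ^ (CARD('n) - card S) else 0))) = t ^ (CARD('n) - card S) * principal_minor A S" .
  qed
  finally show ?thesis .
qed



lemma small_mult_zero:
  fixes a K :: real
  assumes "\<And>t. 0 < t \<Longrightarrow> t \<le> 1 \<Longrightarrow> \<bar>a\<bar> \<le> K * t"
  shows "a = 0"
proof (rule ccontr)
  assume "a \<noteq> 0"
  then have a: "\<bar>a\<bar> > 0" by simp
  have K: "K \<ge> 0" using assms[of 1] a by simp
  define t where "t = min 1 (\<bar>a\<bar> / (K + 1))"
  have t: "0 < t" "t \<le> 1" using a K by (auto simp: t_def)
  have "K * t \<le> K * (\<bar>a\<bar> / (K + 1))" using K by (intro mult_left_mono) (auto simp: t_def)
  also have "\<dots> < \<bar>a\<bar>" using a K by (simp add: field_simps)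
  finally show False using assms[OF t] by simp
qed

lemma coeff_zero:
  fixes c :: "nat \<Rightarrow> real"
  assumes bnd: "\<And>t. 0 < t \<Longrightarrow> t \<le> 1 \<Longrightarrow> \<bar>\<Sum>i\<le>n. c i * t ^ i\<bar> \<le> C * t ^ m"
  shows "j < m \<Longrightarrow> j \<le> n \<Longrightarrow> c j = 0"
proof (induction j rule: less_induct)
  case (less j)
  define S where "S = (\<Sum>i\<le>n. \<bar>c i\<bar>)"
  have C: "C \<ge> 0"
  proof -
    have "\<bar>\<Sum>i\<le>n. c i * 1 ^ i\<bar> \<le> C * 1 ^ m" by (rule bnd) auto
    then show ?thesis by (metis abs_ge_zero order_trans power_one mult_1_right)
  qed
  show ?case
  proof (rule small_mult_zero)
    fix t :: real assume t: "0 < t" "t \<le> 1"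
    have split: "{..n} = {..<j} \<union> {j} \<union> {j<..n}" using less.prems by auto
    have "(\<Sum>i\<le>n. c i * t ^ i) = (\<Sum>i<j. c i * t ^ i) + c j * t ^ j + (\<Sum>i\<in>{j<..n}. c i * t ^ i)"
      unfolding split by (subst sum.union_disjoint, auto)+
    also have "(\<Sum>i<j. c i * t ^ i) = 0"
      using less.IH less.prems by (intro sum.neutral) auto
    finally have eq: "c j * t ^ j = (\<Sum>i\<le>n. c i * t ^ i) - (\<Sum>i\<in>{j<..n}. c i * t ^ i)" by simp
    have tpow: "t ^ i \<le> t ^ Suc j" if "i \<ge> Suc j" for i
      using t that by (intro power_decreasing) auto
    have "\<bar>\<Sum>i\<in>{j<..n}. c i * t ^ i\<bar> \<le> (\<Sum>i\<in>{j<..n}. \<bar>c i\<bar> * t ^ Suc j)"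
      apply (rule order_trans[OF sum_abs])
      apply (rule sum_mono)
      using t tpow by (auto simp: abs_mult intro!: mult_left_mono)
    also have "\<dots> \<le> S * t ^ Suc j"
      unfolding S_def sum_distrib_right[symmetric]
      using t by (intro mult_right_mono sum_mono2) auto
    finally have b2: "\<bar>\<Sum>i\<in>{j<..n}. c i * t ^ i\<bar> \<le> S * t ^ Suc j" .
    have "C * t ^ m \<le> C * t ^ Suc j"
      using C t less.prems by (intro mult_left_mono power_decreasing) auto
    then have b1: "\<bar>\<Sum>i\<le>n. c i * t ^ i\<bar> \<le> C * t ^ Suc j" using bnd[OF t] by simp
    have "\<bar>c j\<bar> * t ^ j \<le> (C + S) * t ^ Suc j"
      using b1 b2 eq by (simp add: abs_mult algebra_simps)
    then have "\<bar>c j\<bar> * t ^ j \<le> ((C + S) * t) * t ^ j" by (simp add: algebra_simps)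
    then show "\<bar>c j\<bar> \<le> (C + S) * t" using t by simp
  qed
qed



lemma mat_rdistrib: "((X::real^'n^'n) + Y) ** Z = X ** Z + Y ** Z"
  by (simp add: vec_eq_iff matrix_matrix_mult_def sum.distrib algebra_simps)

lemma mat_comm: "mat (t::real) ** (P::real^'n^'n) = P ** mat t"
proof -
  have "(mat t ** P)$i$j = t * P$i$j" for i j
  proof -
    have "(mat t ** P)$i$j = (\<Sum>k\<in>UNIV. if i = k then t * P$k$j else 0)"
      unfolding matrix_matrix_mult_def mat_def vec_lambda_beta by (rule sum.cong) auto
    then show ?thesis by simp
  qed
  moreover have "(P ** mat t)$i$j = t * P$i$j" for i j
    by (simp add: matrix_matrix_mult_def mat_def if_distrib mult.commute cong: if_cong)
  ultimately show ?thesis by (simp add: vec_eq_iff)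
qed

lemma det_similar:
  fixes A P P' :: "real^'n^'n"
  assumes "P' ** P = mat 1"
  shows "det (mat t + A) = det (mat t + P' ** A ** P)"
proof -
  have "det P' * det P = 1" using det_mul[of P' P] assms by simp
  have "P' ** (mat t + A) ** P = mat t + P' ** A ** P"
    by (simp add: matrix_add_ldistrib mat_rdistrib mat_comm matrix_mul_assoc assms
         flip: matrix_mul_assoc[of P' "mat t" P])
  then have "det (mat t + P' ** A ** P) = det P' * det (mat t + A) * det P"
    by (metis det_mul)
  then show ?thesis using \<open>det P' * det P = 1\<close> by (simp add: algebra_simps)
qed



lemma det_bound:
  fixes M :: "real^'n^'n" and Z :: "'n set"
  assumes colZ: "\<And>i j. j \<in> Z \<Longrightarrow> M$i$j = 0"
    and col0: "\<And>i. i \<notin> Z \<Longrightarrow> M$i$i0 = 0" and i0: "i0 \<notin> Z"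
    and t: "0 < t" "t \<le> 1"
  shows "\<bar>det (mat t + M)\<bar> \<le> real (card {p. p permutes (UNIV::'n set)}) *
            (t ^ (card Z + 1) * (1 + (\<Sum>i\<in>UNIV. \<Sum>j\<in>UNIV. \<bar>M$i$j\<bar>)) ^ CARD('n))"
proof -
  define B where "B = 1 + (\<Sum>i\<in>UNIV. \<Sum>j\<in>UNIV. \<bar>M$i$j\<bar>)"
  define X where "X = mat t + M"
  define T where "T = insert i0 Z"
  have Mb: "\<bar>M$i$j\<bar> \<le> B - 1" for i j
  proof -
    have "\<bar>M$i$j\<bar> \<le> (\<Sum>j\<in>UNIV. \<bar>M$i$j\<bar>)" by (rule member_le_sum) auto
    also have "\<dots> \<le> (\<Sum>i\<in>UNIV. \<Sum>j\<in>UNIV. \<bar>M$i$j\<bar>)"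
      by (rule member_le_sum[of i UNIV "\<lambda>i. \<Sum>j\<in>UNIV. \<bar>M$i$j\<bar>"]) (auto intro: sum_nonneg)
    finally show ?thesis by (simp add: B_def)
  qed
  have B1: "B \<ge> 1" using Mb[of i0 i0] by simp
  have Xe: "X$i$j = (if i = j then t else 0) + M$i$j" for i j
    by (simp add: X_def mat_def)
  have Xb: "\<bar>X$i$j\<bar> \<le> B" for i j
    using Mb[of i j] t by (auto simp: Xe)
  have XT: "X$i$i = t" if "i \<in> T" for i
    using that colZ col0 i0 by (auto simp: Xe T_def)
  have trm: "\<bar>\<Prod>i\<in>UNIV. X$i$(p i)\<bar> \<le> t ^ (card Z + 1) * B ^ CARD('n)"
    if p: "p permutes (UNIV::'n set)" for p
  proof (cases "(\<Prod>i\<in>UNIV. X$i$(p i)) = 0")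
    case True then show ?thesis using t B1 by (simp only: abs_zero) (intro mult_nonneg_nonneg zero_le_power; simp)
  next
    case False
    then have nz: "X$i$(p i) \<noteq> 0" for i by auto
    have pinv: "p (inv p j) = j" for j using p by (simp add: permutes_inverses(1))
    have fixZ: "p j = j" if "j \<in> Z" for j
    proof (rule ccontr)
      assume "p j \<noteq> j"
      then have "inv p j \<noteq> j" using pinv[of j] by metis
      then have "X$(inv p j)$(p (inv p j)) = 0" using colZ[OF that] by (simp add: Xe pinv)
      then show False using nz by blast
    qed
    have fix0: "p i0 = i0"
    proof (rule ccontr)
      assume "p i0 \<noteq> i0"
      then have ne: "inv p i0 \<noteq> i0" using pinv[of i0] by metis
      show False
      proof (cases "inv p i0 \<in> Z")
        case True
        then have "p (inv p i0) = inv p i0" by (rule fixZ)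
        then show False using ne pinv[of i0] by simp
      next
        case False
        then have "X$(inv p i0)$(p (inv p i0)) = 0" using col0[OF False] ne by (simp add: Xe pinv)
        then show False using nz by blast
      qed
    qed
    have fixT: "p i = i" if "i \<in> T" for i using that fixZ fix0 by (auto simp: T_def)
    have "\<bar>\<Prod>i\<in>UNIV. X$i$(p i)\<bar> = (\<Prod>i\<in>UNIV. \<bar>X$i$(p i)\<bar>)" by (simp add: abs_prod)
    also have "\<dots> \<le> (\<Prod>i\<in>UNIV. if i \<in> T then t else B)"
      by (rule prod_mono) (use XT fixT Xb t in auto)
    also have "\<dots> = t ^ card T * B ^ card (UNIV - T)"
      by (simp add: prod.If_cases Int_absorb1 flip: Compl_eq_Diff_UNIV)
    also have "\<dots> \<le> t ^ card T * B ^ CARD('n)"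
      using t B1 by (intro mult_left_mono power_increasing card_mono) auto
    also have "card T = card Z + 1" using i0 by (simp add: T_def)
    finally show ?thesis .
  qed
  have "\<bar>det X\<bar> \<le> (\<Sum>p\<in>{p. p permutes (UNIV::'n set)}. \<bar>of_int (sign p) * (\<Prod>i\<in>UNIV. X$i$(p i))\<bar>)"
    unfolding det_def by (rule sum_abs)
  also have "\<dots> \<le> (\<Sum>p\<in>{p. p permutes (UNIV::'n set)}. t ^ (card Z + 1) * B ^ CARD('n))"
    by (rule sum_mono) (use trm in \<open>auto simp: abs_mult sign_def simp del: power_Suc\<close>)
  also have "\<dots> = real (card {p. p permutes (UNIV::'n set)}) * (t ^ (card Z + 1) * B ^ CARD('n))"
    by simp
  finally show ?thesis by (simp add: X_def B_def)
qed



lemma core_basis: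
  fixes A :: "real^'n^'n"
  assumes u: "u \<in> range ((*v) A)" "u \<noteq> 0" "A *v u = 0"
  obtains P P' :: "real^'n^'n" and Z i0 where
    "P' ** P = mat 1"
    "\<And>i j. j \<in> Z \<Longrightarrow> (P' ** A ** P)$i$j = 0"
    "\<And>i. i \<notin> Z \<Longrightarrow> (P' ** A ** P)$i$i0 = 0" "i0 \<notin> Z"
    "CARD('n) \<le> dim (range ((*v) A)) + card Z"
proof -
  obtain w where w: "A *v w = u" using u(1) by auto
  define V where "V = {x. A *v x = 0}"
  have subV: "subspace V" unfolding V_def
    by (rule real_vector.linear_subspace_kernel[OF matrix_vector_mul_linear])
  obtain K where K: "K \<subseteq> V" "independent K" "V \<subseteq> span K" "card K = dim V"
    by (rule basis_exists)
  have spanK: "span K \<subseteq> V" by (rule span_minimal[OF K(1) subV])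
  have wK: "w \<notin> span K" using spanK w u(2) by (auto simp: V_def)
  have indwK: "independent (insert w K)" by (rule independent_insertI[OF wK K(2)])
  obtain B where B: "insert w K \<subseteq> B" "independent B" "UNIV \<subseteq> span B"
    using maximal_independent_subset_extend[of "insert w K" UNIV] indwK by auto
  have finB: "finite B" using B(2) by (rule finiteI_independent)
  have finK: "finite K" using K(2) by (rule finiteI_independent)
  have cardB: "card B = CARD('n)" using basis_card_eq_dim[of B UNIV] B by (simp add: DIM_cart)
  obtain g where g: "bij_betw g (UNIV::'n set) B"
    using finite_same_card_bij[of "UNIV::'n set" B] finB cardB by auto
  define Z where "Z = {j. g j \<in> K}"
  have wB: "w \<in> B" using B(1) by auto
  then obtain i0 where i0: "g i0 = w" using g by (metis bij_betw_def imageE)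
  have i0Z: "i0 \<notin> Z" using wK span_base i0 by (auto simp: Z_def)
  have gZ: "bij_betw g Z K"
  proof -
    have "g ` Z = K" using g B(1) unfolding Z_def bij_betw_def by blast
    then show ?thesis using bij_betw_subset[OF g, of Z] by auto
  qed
  have cardZ: "card Z = card K" using gZ by (rule bij_betw_same_card)
  have rk: "CARD('n) \<le> dim (range ((*v) A)) + card Z"
  proof -
    define Q where "Q = orthogonal_comp V"
    have subQ: "subspace Q" unfolding Q_def by (rule subspace_orthogonal_comp)
    have orth: "x \<bullet> y = 0" if "x \<in> V" "y \<in> Q" for x y
      using that unfolding Q_def orthogonal_comp_def orthogonal_def by blast
    have d1: "dim (V \<union> Q) = dim V + dim Q" by (rule dim_orthogonal_sum) (rule orth)
    have "UNIV \<subseteq> span (V \<union> Q)"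
    proof
      fix x :: "real^'n"
      have "x \<in> V + Q" using subspace_sum_orthogonal_comp[OF subV] by (simp add: Q_def)
      then obtain v q where "v \<in> V" "q \<in> Q" "x = v + q" unfolding set_plus_def by blast
      then show "x \<in> span (V \<union> Q)" by (simp add: span_add span_base)
    qed
    then have "dim (UNIV::(real^'n) set) \<le> dim (span (V \<union> Q))" by (rule dim_subset)
    then have d2: "CARD('n) \<le> dim V + dim Q" using d1 by (simp add: DIM_cart)
    have inj: "inj_on ((*v) A) (span Q)"
    proof (rule inj_onI)
      fix x y assume xy: "x \<in> span Q" "y \<in> span Q" "A *v x = A *v y"
      then have "x - y \<in> Q" using subQ by (metis span_diff span_eq_iff)
      moreover have "x - y \<in> V" using xy(3) by (simp add: V_def matrix_vector_mult_diff_distrib)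
      ultimately have "x - y \<in> V \<inter> Q" by blast
      then show "x = y" using orthogonal_Int_0[OF subV] by (simp add: Q_def)
    qed
    have "dim Q = dim ((*v) A ` Q)"
      by (rule dim_image_eq[OF matrix_vector_mul_linear inj, symmetric])
    also have "\<dots> \<le> dim (range ((*v) A))" by (rule dim_subset) auto
    finally have "dim Q \<le> dim (range ((*v) A))" .
    then show ?thesis using d2 K(4) cardZ by linarith
  qed
  define P :: "real^'n^'n" where "P = (\<chi> i j. g j $ i)"
  have Pv: "P *v c = (\<Sum>j\<in>UNIV. c$j *\<^sub>R g j)" for c
    by (simp add: P_def vec_eq_iff matrix_vector_mult_def mult.commute)
  have Pinj: "c = 0" if "P *v c = 0" for c
  proof -
    let ?h = "inv_into UNIV g"
    have "(\<Sum>v\<in>B. c$(?h v) *\<^sub>R v) = (\<Sum>j\<in>UNIV. c$(?h (g j)) *\<^sub>R g j)"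
      by (rule sum.reindex_bij_betw[OF g, symmetric])
    also have "\<dots> = (\<Sum>j\<in>UNIV. c$j *\<^sub>R g j)" using g by (simp add: bij_betw_inv_into_left)
    finally have "(\<Sum>j\<in>UNIV. c$j *\<^sub>R g j) = (\<Sum>v\<in>B. c$(?h v) *\<^sub>R v)" by simp
    then have sum0: "(\<Sum>v\<in>B. c$(?h v) *\<^sub>R v) = 0" using that Pv by simp
    have ind: "\<forall>c'. (\<Sum>v\<in>B. c' v *\<^sub>R v) = 0 \<longrightarrow> (\<forall>v\<in>B. c' v = 0)"
      using B(2) finB unfolding real_vector.independent_explicit_module by blast
    have all0: "\<forall>v\<in>B. c$(?h v) = 0" using ind[rule_format, of "\<lambda>v. c$(?h v)", OF sum0] by blast
    have gB: "g j \<in> B" for j using g by (simp add: bij_betwE)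
    have "c$j = 0" for j
    proof -
      have "c$(?h (g j)) = 0" using all0 gB[of j] by blast
      then show ?thesis using bij_betw_inv_into_left[OF g, of j] by simp
    qed
    then show ?thesis by (simp add: vec_eq_iff)
  qed
  have "det P \<noteq> 0"
    using det_nz_iff_inj[of "(*v) P"] Pinj matrix_vector_mul_linear
    by (simp add: linear_injective_0 matrix_vector_mul_linear)
  then obtain P' where P': "P ** P' = mat 1" "P' ** P = mat 1"
    using invertible_det_nz[of P] unfolding invertible_def by auto
  define M where "M = P' ** A ** P"
  have Pax: "P *v axis j 1 = g j" for j
    by (simp add: matrix_vector_mult_basis column_def P_def vec_eq_iff)
  have Mcol: "M$i$j = (P' *v (A *v g j))$i" for i j
  proof -
    have "M$i$j = (M *v axis j 1)$i" by (simp add: matrix_vector_mult_basis column_def)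
    also have "M *v axis j 1 = P' *v (A *v (P *v axis j 1))"
      by (simp add: M_def matrix_vector_mul_assoc matrix_mul_assoc)
    finally show ?thesis by (simp add: Pax)
  qed
  have colZ: "M$i$j = 0" if "j \<in> Z" for i j
  proof -
    have "A *v g j = 0" using that K(1) by (auto simp: Z_def V_def)
    then show ?thesis by (simp add: Mcol)
  qed
  have "u \<in> span K" using u(3) K(3) by (auto simp: V_def)
  then obtain a where a: "u = (\<Sum>v\<in>K. a v *\<^sub>R v)" using span_finite[OF finK] by auto
  define c where "c = (\<chi> j. if j \<in> Z then a (g j) else 0)"
  have "P *v c = (\<Sum>j\<in>UNIV. (if j \<in> Z then a (g j) *\<^sub>R g j else 0))"
    unfolding Pv by (rule sum.cong) (auto simp: c_def)
  also have "\<dots> = (\<Sum>j\<in>Z. a (g j) *\<^sub>R g j)" by (simp add: sum.If_cases)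
  also have "\<dots> = u" unfolding a by (rule sum.reindex_bij_betw[OF gZ])
  finally have Pc: "P *v c = u" .
  have col0: "M$i$i0 = 0" if "i \<notin> Z" for i
  proof -
    have "P' *v (A *v g i0) = P' *v (P *v c)" using Pc w i0 by simp
    also have "\<dots> = c" by (simp add: matrix_vector_mul_assoc P'(2))
    finally have "P' *v (A *v g i0) = c" .
    then show ?thesis using that by (simp add: Mcol c_def)
  qed
  show ?thesis
    apply (rule that[of P' P Z i0])
    using P'(2) colZ col0 i0Z rk by (auto simp: M_def)
qed



lemma det_poly:
  fixes A :: "real^'n^'n"
  shows "det (mat t + A) = (\<Sum>j\<le>CARD('n). (\<Sum>S\<in>{S\<in>Pow UNIV. CARD('n) - card S = j}. principal_minor A S) * t ^ j)"
proof -
  have "det (mat t + A) = (\<Sum>S\<in>Pow UNIV. t ^ (CARD('n) - card S) * principal_minor A S)"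
    by (rule det_expand)
  also have "\<dots> = (\<Sum>j\<le>CARD('n). \<Sum>S\<in>{S\<in>Pow UNIV. CARD('n) - card S = j}. t ^ (CARD('n) - card S) * principal_minor A S)"
    by (rule sum.group[symmetric]) auto
  also have "\<dots> = (\<Sum>j\<le>CARD('n). (\<Sum>S\<in>{S\<in>Pow UNIV. CARD('n) - card S = j}. principal_minor A S) * t ^ j)"
  proof (rule sum.cong[OF refl])
    fix j assume "j \<in> {..CARD('n)}"
    have "(\<Sum>S\<in>{S\<in>Pow UNIV. CARD('n) - card S = j}. t ^ (CARD('n) - card S) * principal_minor A S)
       = (\<Sum>S\<in>{S\<in>Pow UNIV. CARD('n) - card S = j}. principal_minor A S * t ^ j)"
      by (rule sum.cong) auto
    then show "(\<Sum>S\<in>{S\<in>Pow UNIV. CARD('n) - card S = j}. t ^ (CARD('n) - card S) * principal_minor A S)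
       = (\<Sum>S\<in>{S\<in>Pow UNIV. CARD('n) - card S = j}. principal_minor A S) * t ^ j"
      by (simp add: sum_distrib_right)
  qed
  finally show ?thesis .
qed

lemma core:
  fixes A :: "real^'n^'n"
  assumes u: "u \<in> range ((*v) A)" "u \<noteq> 0" "A *v u = 0"
  shows "sum_principal_minors A (dim (range ((*v) A))) = 0"
proof -
  obtain P P' :: "real^'n^'n" and Z i0 where
    PP: "P' ** P = mat 1" and
    colZ: "\<And>i j. j \<in> Z \<Longrightarrow> (P' ** A ** P)$i$j = 0" and
    col0: "\<And>i. i \<notin> Z \<Longrightarrow> (P' ** A ** P)$i$i0 = 0" and i0: "i0 \<notin> Z" and
    rk: "CARD('n) \<le> dim (range ((*v) A)) + card Z"
    using core_basis[OF u] by metis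
  define r where "r = dim (range ((*v) A))"
  define n where "n = CARD('n)"
  define c where "c j = (\<Sum>S\<in>{S\<in>Pow UNIV. n - card S = j}. principal_minor A S)" for j
  define M where "M = P' ** A ** P"
  define Cst where "Cst = real (card {p. p permutes (UNIV::'n set)}) * (1 + (\<Sum>i\<in>UNIV. \<Sum>j\<in>UNIV. \<bar>M$i$j\<bar>)) ^ CARD('n)"
  have Cst0: "Cst \<ge> 0" unfolding Cst_def
    by (intro mult_nonneg_nonneg zero_le_power) (auto intro: add_nonneg_nonneg sum_nonneg)
  have bnd: "\<bar>\<Sum>j\<le>n. c j * t ^ j\<bar> \<le> Cst * t ^ (n - r + 1)" if t: "0 < t" "t \<le> 1" for t
  proof -
    have "(\<Sum>j\<le>n. c j * t ^ j) = det (mat t + A)" unfolding c_def n_def by (rule det_poly[symmetric])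
    also have "\<dots> = det (mat t + M)" unfolding M_def by (rule det_similar[OF PP])
    finally have e: "(\<Sum>j\<le>n. c j * t ^ j) = det (mat t + M)" .
    have "\<bar>det (mat t + M)\<bar> \<le> real (card {p. p permutes (UNIV::'n set)}) *
            (t ^ (card Z + 1) * (1 + (\<Sum>i\<in>UNIV. \<Sum>j\<in>UNIV. \<bar>M$i$j\<bar>)) ^ CARD('n))"
      by (rule det_bound[OF _ _ i0 t]) (use colZ col0 in \<open>auto simp: M_def\<close>)
    also have "\<dots> = Cst * t ^ (card Z + 1)" by (simp add: Cst_def algebra_simps)
    also have "\<dots> \<le> Cst * t ^ (n - r + 1)"
      using rk t Cst0 unfolding r_def n_def by (intro mult_left_mono power_decreasing) auto
    finally show ?thesis using e by simp
  qed
  have "c (n - r) = 0"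
    by (rule coeff_zero[OF bnd]) auto
  moreover have "{S\<in>Pow (UNIV::'n set). n - card S = n - r} = {S. card S = r}"
  proof -
    have "card S \<le> n" for S :: "'n set" unfolding n_def by (rule card_mono) auto
    moreover have "r \<le> n" unfolding r_def n_def
      using dim_subset[of "range ((*v) A)" "UNIV::(real^'n) set"] by (simp add: DIM_cart)
    ultimately have eqv: "(n - card S = n - r) = (card S = r)" for S :: "'n set"
      by (metis diff_diff_cancel)
    show ?thesis
    proof (rule set_eqI)
      fix S :: "'n set"
      show "S \<in> {S\<in>Pow UNIV. n - card S = n - r} \<longleftrightarrow> S \<in> {S. card S = r}"
        unfolding mem_Collect_eq using eqv[of S] by blast
    qed
  qed
  ultimately show ?thesis
    unfolding sum_principal_minors_def r_def[symmetric] c_def by simp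
qed



lemma dot_mv: "(x::real^'n) \<bullet> ((A::real^'m^'n) *v y) = (x v* A) \<bullet> y"
proof -
  have "x \<bullet> (A *v y) = (\<Sum>i\<in>UNIV. \<Sum>j\<in>UNIV. x$i * A$i$j * y$j)"
    by (simp add: inner_vec_def matrix_vector_mult_def sum_distrib_left mult.assoc)
  also have "\<dots> = (\<Sum>j\<in>UNIV. \<Sum>i\<in>UNIV. x$i * A$i$j * y$j)" by (rule sum.swap)
  also have "\<dots> = (x v* A) \<bullet> y"
    by (simp add: inner_vec_def vector_matrix_mult_def sum_distrib_right mult.assoc)
  finally show ?thesis .
qed

lemma orth_span:
  fixes u :: "'a::real_inner"
  assumes "\<And>w. w \<in> C \<Longrightarrow> w \<bullet> u = 0" "z \<in> span C"
  shows "z \<bullet> u = 0"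
proof -
  have "subspace {z. z \<bullet> u = 0}" by (auto simp: subspace_def inner_add_left)
  then have "span C \<subseteq> {z. z \<bullet> u = 0}" using assms(1) by (intro span_minimal) auto
  then show ?thesis using assms(2) by auto
qed

lemma cols_orth:
  fixes W :: "real^'p^'n"
  assumes "transpose W *v x = 0" "w \<in> columns W"
  shows "w \<bullet> x = 0"
proof -
  obtain i where w: "w = column i W" using assms(2) by (auto simp: columns_def)
  have "(transpose W *v x)$i = w \<bullet> x"
    by (simp add: w column_def inner_vec_def matrix_vector_mult_def transpose_def mult.commute)
  then show ?thesis using assms(1) by simp
qed

lemma in_range_N:
  fixes N :: "real^'m^'n" and W :: "real^'p^'n"
  assumes Wsp: "span (columns W) = {y. transpose N *v y = 0}"
    and u: "transpose W *v u = 0"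
  shows "u \<in> range ((*v) N)"
proof -
  define R where "R = range ((*v) N)"
  have subR: "subspace R" unfolding R_def
    by (rule real_vector.linear_subspace_image[OF matrix_vector_mul_linear subspace_UNIV, simplified])
  obtain p q where pq: "p \<in> R" "q \<in> orthogonal_comp R" "u = p + q"
    using subspace_sum_orthogonal_comp[OF subR] unfolding set_plus_def by blast
  have h: "\<forall>y. (N *v y) \<bullet> q = 0"
    using pq(2) unfolding R_def orthogonal_comp_def orthogonal_def by auto
  have "(q v* N) \<bullet> e = 0" for e
    using h[rule_format, of e] dot_mv[of q N e] by (simp add: inner_commute)
  then have "q v* N = 0" using inner_eq_zero_iff by blast
  then have "q \<in> span (columns W)" using Wsp by simp
  then have qu: "q \<bullet> u = 0"
    by (rule orth_span[rotated]) (rule cols_orth[OF u])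
  have "p \<bullet> q = 0" using pq(1,2) unfolding orthogonal_comp_def orthogonal_def by blast
  then have "q \<bullet> q = 0" using qu pq(3) by (simp add: inner_add_right inner_commute)
  then have "q = 0" by simp
  then show ?thesis using pq R_def by simp
qed



lemma lnq: "0 < a \<Longrightarrow> 0 < b \<Longrightarrow> a \<noteq> b \<Longrightarrow> (a - b) / (ln a - ln b) > (0::real)"
proof (cases "a < b")
  case True
  assume "0 < a" "0 < b"
  then have "ln a < ln b" using True by simp
  then show ?thesis using True by (intro divide_neg_neg) auto
next
  case False
  assume "0 < a" "0 < b" "a \<noteq> b"
  then have "b < a" using False by simp
  then have "ln b < ln a" using \<open>0 < b\<close> by simp
  then show ?thesis using \<open>b < a\<close> by (intro divide_pos_pos) auto
qed

lemma expq: "a \<noteq> b \<Longrightarrow> (exp a - exp b) / (a - b) > (0::real)"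
proof (cases "a < b")
  case True
  then show ?thesis by (intro divide_neg_neg) auto
next
  case False
  assume "a \<noteq> b"
  then have "b < a" using False by simp
  then show ?thesis by (intro divide_pos_pos) auto
qed

lemma neg_range: "range ((*v) (- (J::real^'n^'m))) = range ((*v) J)"
proof -
  have e: "(- J) *v y = J *v (- y)" for y
    by (simp add: vec_eq_iff matrix_vector_mult_def sum_negf)
  show ?thesis
  proof
    show "range ((*v) (- J)) \<subseteq> range ((*v) J)" using e by auto
    show "range ((*v) J) \<subseteq> range ((*v) (- J))"
    proof
      fix v assume "v \<in> range ((*v) J)"
      then obtain y where "v = J *v y" by auto
      then have "v = (- J) *v (- y)" using e[of "- y"] by simp
      then show "v \<in> range ((*v) (- J))" by blast
    qed
  qed
qed

lemma rate_exp:
  assumes "\<forall>i. x$i > 0"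
  shows "(rate alpha k x)$j = k$j * exp (\<Sum>i\<in>UNIV. real (alpha$i$j) * ln (x$i))"
proof -
  have "x$i ^ (alpha$i$j) = exp (real (alpha$i$j) * ln (x$i))" for i
    using assms by (simp add: exp_of_nat_mult)
  then show ?thesis by (simp add: rate_def exp_sum)
qed

lemma uniq:
  fixes alpha beta :: "nat^'m^'n" and k :: "real^'m" and W :: "real^'p^'n"
  assumes W_span: "span (columns W) = {y. transpose (stoich alpha beta) *v y = 0}"
    and J_im: "\<And>v x. (\<forall>j. v$j > 0) \<Longrightarrow> (\<forall>i. x$i > 0) \<Longrightarrow>
                 range (\<lambda>y. Jmat alpha beta v x *v y) = range (\<lambda>y. stoich alpha beta *v y)"
    and k_pos: "\<forall>j. k$j > 0"
    and a_pos: "\<And>v x. (\<forall>j. v$j > 0) \<Longrightarrow> (\<forall>i. x$i > 0) \<Longrightarrow> a_coef alpha beta v x > 0"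
    and xpos: "\<forall>i. x$i > 0" and ypos: "\<forall>i. y$i > 0"
    and Wxy: "transpose W *v x = transpose W *v y"
    and fxy: "mafield alpha beta k x = mafield alpha beta k y"
  shows "x = y"
proof (rule ccontr)
  assume xy: "x \<noteq> y"
  define N where "N = stoich alpha beta"
  define z where "z l = ln (x$l) - ln (y$l)" for l
  define mu :: "real^'n" where "mu = (\<chi> l. if x$l = y$l then x$l else (x$l - y$l) / z l)"
  have mu_pos: "\<forall>l. mu$l > 0"
    using xpos ypos lnq by (auto simp: mu_def z_def)
  have xy_mu: "x$l - y$l = mu$l * z l" for l
  proof (cases "x$l = y$l")
    case True then show ?thesis by (simp add: z_def)
  next
    case False
    then have "z l \<noteq> 0" using xpos ypos by (simp add: z_def)
    then show ?thesis using False by (simp add: mu_def)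
  qed
  define s where "s w j = (\<Sum>i\<in>UNIV. real (alpha$i$j) * ln (w$i))" for w :: "real^'n" and j
  define kap :: "real^'m" where "kap = (\<chi> j. k$j * (if s x j = s y j then exp (s x j)
       else (exp (s x j) - exp (s y j)) / (s x j - s y j)))"
  have kap_pos: "\<forall>j. kap$j > 0"
    using k_pos expq by (auto simp: kap_def intro!: mult_pos_pos)
  have rdiff: "(rate alpha k x)$j - (rate alpha k y)$j = kap$j * (s x j - s y j)" for j
  proof -
    have rx: "(rate alpha k x)$j = k$j * exp (s x j)" using rate_exp[OF xpos, of alpha k j] by (simp add: s_def)
    have ry: "(rate alpha k y)$j = k$j * exp (s y j)" using rate_exp[OF ypos, of alpha k j] by (simp add: s_def)
    show ?thesis
    proof (cases "s x j = s y j")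
      case True then show ?thesis by (simp add: rx ry)
    next
      case False
      then have "s x j - s y j \<noteq> 0" by simp
      then show ?thesis using False by (simp add: rx ry kap_def field_simps)
    qed
  qed
  have sdiff: "s x j - s y j = (\<Sum>l\<in>UNIV. real (alpha$l$j) * z l)" for j
    by (simp add: s_def z_def sum_subtractf algebra_simps)
  define J where "J = Jmat alpha beta kap mu"
  define u where "u = x - y"
  have u0: "u \<noteq> 0" using xy by (simp add: u_def)
  have Ju: "J *v u = 0"
  proof -
    have "(J *v u)$i = 0" for i
    proof -
      have "(J *v u)$i = (\<Sum>l\<in>UNIV. \<Sum>j\<in>UNIV. N$i$j * real (alpha$l$j) * kap$j / mu$l * (mu$l * z l))"
        by (simp add: matrix_vector_mult_def J_def Jmat_def N_def u_def xy_mu sum_distrib_right)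
      also have "\<dots> = (\<Sum>l\<in>UNIV. \<Sum>j\<in>UNIV. N$i$j * kap$j * (real (alpha$l$j) * z l))"
      proof (intro sum.cong refl)
        fix l j
        have "mu$l \<noteq> 0" using mu_pos by (metis less_irrefl)
        then show "N$i$j * real (alpha$l$j) * kap$j / mu$l * (mu$l * z l) = N$i$j * kap$j * (real (alpha$l$j) * z l)"
          by (simp add: field_simps)
      qed
      also have "\<dots> = (\<Sum>j\<in>UNIV. N$i$j * kap$j * (\<Sum>l\<in>UNIV. real (alpha$l$j) * z l))"
        by (subst sum.swap) (simp add: sum_distrib_left)
      also have "\<dots> = (\<Sum>j\<in>UNIV. N$i$j * ((rate alpha k x)$j - (rate alpha k y)$j))"
        by (simp add: rdiff sdiff mult.assoc)
      also have "\<dots> = (mafield alpha beta k x - mafield alpha beta k y)$i"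
        by (simp add: mafield_def N_def matrix_vector_mult_def algebra_simps sum_subtractf)
      also have "\<dots> = 0" using fxy by simp
      finally show ?thesis .
    qed
    then show ?thesis by (simp add: vec_eq_iff)
  qed
  have Wu: "transpose W *v u = 0" using Wxy by (simp add: u_def matrix_vector_mult_diff_distrib)
  have uN: "u \<in> range ((*v) N)"
    using in_range_N[OF W_span[folded N_def] Wu] .
  have rJ: "range ((*v) J) = range ((*v) N)"
    using J_im[OF kap_pos mu_pos] by (simp add: J_def N_def)
  have rA: "range ((*v) (- J)) = range ((*v) N)" using neg_range[of J] rJ by (rule trans)
  have Au: "(- J) *v u = 0"
    using Ju by (simp add: vec_eq_iff matrix_vector_mult_def sum_negf)
  have "sum_principal_minors (- J) (dim (range ((*v) (- J)))) = 0"
    by (rule core[of u]) (use uN rA u0 Au in auto)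
  then have "sum_principal_minors (- J) (rank N) = 0" unfolding rA rank_dim_range .
  then have "a_coef alpha beta kap mu = 0"
    by (simp add: a_coef_def J_def N_def)
  then show False using a_pos[OF kap_pos mu_pos] by simp
qed



lemma boundary_nonneg:
  assumes x: "\<forall>i. x$i \<ge> 0" and xi: "x$i = 0" and k: "\<forall>j. k$j > 0"
  shows "(mafield alpha beta k x)$i \<ge> 0"
proof -
  have "stoich alpha beta $i$j * (rate alpha k x)$j \<ge> 0" for j
  proof (cases "alpha$i$j = 0")
    case True
    have "(rate alpha k x)$j \<ge> 0" unfolding rate_def vec_lambda_beta
      using x k[rule_format, of j] by (intro mult_nonneg_nonneg prod_nonneg) auto
    moreover have "stoich alpha beta $i$j \<ge> 0" using True by (simp add: stoich_def)
    ultimately show ?thesis by simp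
  next
    case False
    have p0: "(\<Prod>l\<in>UNIV. x$l ^ (alpha$l$j)) = 0"
      using xi False by (intro prod_zero) (auto intro!: bexI[of _ i])
    have "(rate alpha k x)$j = 0" by (simp only: rate_def vec_lambda_beta p0 mult_zero_right)
    then show ?thesis by simp
  qed
  then show ?thesis by (simp add: mafield_def matrix_vector_mult_def sum_nonneg)
qed

lemma cont_mafield: "continuous_on UNIV (mafield alpha beta k)"
proof -
  have "continuous_on UNIV (rate alpha k)"
    unfolding rate_def by (intro continuous_intros)
  moreover have "continuous_on UNIV ((*v) (stoich alpha beta))"
    by (rule linear_continuous_on[OF matrix_vector_mul_linear[THEN linear_conv_bounded_linear[THEN iffD1]]])
  ultimately show ?thesis unfolding mafield_def
    using continuous_on_compose2 by blast
qed

lemma Wcol: "(transpose (W::real^'p^'n) *v w)$i = column i W \<bullet> w"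
  by (simp add: column_def inner_vec_def matrix_vector_mult_def transpose_def mult.commute)

lemma existence:
  fixes alpha beta :: "nat^'m^'n" and k :: "real^'m" and W :: "real^'p^'n" and c0 :: "real^'p"
  assumes cons: "\<exists>lam::real^'n. (\<forall>i. lam$i > 0) \<and> lam v* stoich alpha beta = 0"
    and W_span: "span (columns W) = {y. transpose (stoich alpha beta) *v y = 0}"
    and k_pos: "\<forall>j. k$j > 0"
    and nonempty: "\<exists>x\<in>omega W c0. \<forall>i. x$i > 0"
  shows "\<exists>x\<in>omega W c0. mafield alpha beta k x = 0"
proof -
  define S where "S = omega W c0"
  define F where "F = mafield alpha beta k"
  obtain lam :: "real^'n" where lam: "\<forall>i. lam$i > 0" "lam v* stoich alpha beta = 0" using cons by blast
  obtain x0 where x0: "x0 \<in> S" using nonempty S_def by blast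
  have lam_span: "lam \<in> span (columns W)" using W_span lam(2) by simp
  have colker: "column i W v* stoich alpha beta = 0" for i
  proof -
    have "column i W \<in> span (columns W)" by (rule span_base) (auto simp: columns_def)
    then show ?thesis using W_span by simp
  qed
  have WF: "transpose W *v F x = 0" for x
  proof -
    have "(transpose W *v F x)$i = 0" for i
      unfolding Wcol F_def mafield_def dot_mv colker by simp
    then show ?thesis by (simp add: vec_eq_iff)
  qed
  have closedS: "closed S"
  proof -
    have "S = (\<Inter>i. {x. x$i \<ge> 0}) \<inter> {x. transpose W *v x = c0}"
      by (auto simp: S_def omega_def)
    moreover have "closed {x::real^'n. transpose W *v x = c0}"
      by (intro closed_Collect_eq continuous_intros
          linear_continuous_on[OF matrix_vector_mul_linear[THEN linear_conv_bounded_linear[THEN iffD1]]])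
    moreover have "closed {x::real^'n. x$i \<ge> 0}" for i
      by (intro closed_Collect_le continuous_intros)
    ultimately show ?thesis by auto
  qed
  define L where "L = lam \<bullet> x0"
  have boundedS: "bounded S"
  proof -
    have "S \<subseteq> cbox 0 (\<chi> i. L / lam$i)"
    proof
      fix x assume x: "x \<in> S"
      have "transpose W *v (x - x0) = 0" using x x0
        by (simp add: S_def omega_def matrix_vector_mult_diff_distrib)
      then have "lam \<bullet> (x - x0) = 0"
        by (intro orth_span[OF _ lam_span]) (rule cols_orth)
      then have lx: "lam \<bullet> x = L" by (simp add: L_def inner_diff_right)
      have xnn: "\<forall>i. x$i \<ge> 0" using x by (simp add: S_def omega_def)
      have "x$i \<le> L / lam$i" for i
      proof -
        have "lam$i * x$i \<le> (\<Sum>j\<in>UNIV. lam$j * x$j)"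
        proof (rule member_le_sum)
          fix j :: 'n
          show "0 \<le> lam$j * x$j" using xnn lam(1) by (metis less_imp_le mult_nonneg_nonneg)
        qed auto
        also have "\<dots> = L" using lx by (simp add: inner_vec_def)
        finally show ?thesis using lam(1) by (simp add: field_simps mult.commute)
      qed
      then show "x \<in> cbox 0 (\<chi> i. L / lam$i)" using xnn by (simp add: mem_box_cart)
    qed
    then show ?thesis by (rule bounded_subset[OF bounded_cbox])
  qed
  have compactS: "compact S" using closedS boundedS by (simp add: compact_eq_bounded_closed)
  have convexS: "convex S"
  proof (rule convexI)
    fix x y :: "real^'n" and u v :: real
    assume xy: "x \<in> S" "y \<in> S" and uv: "0 \<le> u" "0 \<le> v" "u + v = 1"
    have e: "transpose W *v (u *\<^sub>R x + v *\<^sub>R y) = u *\<^sub>R (transpose W *v x) + v *\<^sub>R (transpose W *v y)"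
      by (simp only: matrix_vector_right_distrib matrix_vector_mult_scaleR)
    have Wx: "transpose W *v x = c0" "transpose W *v y = c0" using xy by (simp_all only: S_def omega_def mem_Collect_eq)
    have "transpose W *v (u *\<^sub>R x + v *\<^sub>R y) = c0"
      unfolding e Wx using uv(3) by (simp flip: scaleR_add_left)
    moreover have "\<forall>i. (u *\<^sub>R x + v *\<^sub>R y)$i \<ge> 0" using xy uv
      by (auto simp: S_def omega_def intro!: add_nonneg_nonneg mult_nonneg_nonneg)
    ultimately show "u *\<^sub>R x + v *\<^sub>R y \<in> S" by (simp only: S_def omega_def mem_Collect_eq) blast
  qed
  have neS: "S \<noteq> {}" using x0 by auto
  define phi where "phi x = closest_point S (x + F x)" for x
  have contphi: "continuous_on S phi"
  proof -
    have "continuous_on UNIV (\<lambda>x. x + F x)"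
      unfolding F_def by (intro continuous_intros cont_mafield)
    then have c1: "continuous_on S (\<lambda>x. x + F x)" by (rule continuous_on_subset) auto
    show ?thesis unfolding phi_def
      using continuous_on_compose2[OF continuous_on_closest_point[OF convexS closedS neS] c1] by auto
  qed
  have phiS: "phi \<in> S \<rightarrow> S" unfolding phi_def using closest_point_in_set[OF closedS neS] by auto
  obtain x where xS: "x \<in> S" and fx: "phi x = x"
    using brouwer[OF compactS convexS neS contphi phiS] by blast
  have dot: "F x \<bullet> (y - x) \<le> 0" if "y \<in> S" for y
  proof -
    have "\<forall>z\<in>S. dist (x + F x) x \<le> dist (x + F x) z"
      using closest_point_le[OF closedS] fx unfolding phi_def by metis
    then have "inner ((x + F x) - x) (y - x) \<le> 0"
      by (rule any_closest_point_dot[OF convexS closedS xS that])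
    then show ?thesis by simp
  qed
  have xnn: "\<forall>i. x$i \<ge> 0" using xS by (simp add: S_def omega_def)
  define I where "I = {i. x$i > 0}"
  define t where "t = Min (insert 1 ((\<lambda>i. x$i / (\<bar>F x $ i\<bar> + 1)) ` I))"
  have tpos: "t > 0" unfolding t_def
    by (subst Min_gr_iff) (auto simp: I_def intro!: divide_pos_pos add_nonneg_pos)
  have tle: "t \<le> x$i / (\<bar>F x $ i\<bar> + 1)" if "i \<in> I" for i
    unfolding t_def using that by (intro Min_le) auto
  have yS: "x + t *\<^sub>R F x \<in> S"
  proof -
    have "x$i + t * F x $ i \<ge> 0" for i
    proof (cases "i \<in> I")
      case True
      then have xi: "x$i > 0" by (simp add: I_def)
      have "t * \<bar>F x $ i\<bar> \<le> t * (\<bar>F x $ i\<bar> + 1)" using tpos by simp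
      also have "\<dots> \<le> x$i" using tle[OF True] by (simp add: field_simps)
      finally have "t * \<bar>F x $ i\<bar> \<le> x$i" .
      moreover have "- (t * \<bar>F x $ i\<bar>) \<le> t * F x $ i" using tpos
        by (metis abs_ge_minus_self abs_mult abs_of_pos minus_le_iff)
      ultimately show ?thesis by linarith
    next
      case False
      then have "x$i = 0" using xnn by (simp add: I_def) (metis less_eq_real_def)
      then have "F x $ i \<ge> 0" unfolding F_def by (rule boundary_nonneg[OF xnn _ k_pos])
      then show ?thesis using \<open>x$i = 0\<close> tpos by simp
    qed
    moreover have "transpose W *v (x + t *\<^sub>R F x) = c0"
      using xS WF by (simp add: S_def omega_def matrix_vector_right_distrib matrix_vector_mult_scaleR)
    ultimately show ?thesis by (simp add: S_def omega_def)
  qed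
  have "F x \<bullet> (t *\<^sub>R F x) \<le> 0" using dot[OF yS] by simp
  then have "t * (F x \<bullet> F x) \<le> 0" by simp
  then have "F x \<bullet> F x \<le> 0" using tpos by (simp add: mult_le_0_iff)
  then have "F x = 0" using inner_ge_zero[of "F x"] inner_eq_zero_iff[of "F x"] by linarith
  then show ?thesis using xS by (auto simp: S_def F_def)
qed


theorem theorem2:
  fixes alpha beta :: "nat^'m^'n" and k :: "real^'m" and W :: "real^'p^'n" and c0 :: "real^'p"
  assumes cons: "\<exists>lam::real^'n. (\<forall>i. lam$i > 0) \<and> lam v* stoich alpha beta = 0"
    and W_rank: "rank W = CARD('p)"
    and W_span: "span (columns W) = {y. transpose (stoich alpha beta) *v y = 0}"
    and J_im: "\<And>v x. (\<forall>j. v$j > 0) \<Longrightarrow> (\<forall>i. x$i > 0) \<Longrightarrow>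
                 range (\<lambda>y. Jmat alpha beta v x *v y) = range (\<lambda>y. stoich alpha beta *v y)"
    and k_pos: "\<forall>j. k$j > 0"
    and a_pos: "\<And>v x. (\<forall>j. v$j > 0) \<Longrightarrow> (\<forall>i. x$i > 0) \<Longrightarrow> a_coef alpha beta v x > 0"
    and nonempty: "\<exists>x\<in>omega W c0. \<forall>i. x$i > 0"
    and no_bdry: "\<And>x. x \<in> omega W c0 \<Longrightarrow> (\<exists>i. x$i = 0) \<Longrightarrow> mafield alpha beta k x \<noteq> 0"
  shows "(\<exists>!x. x \<in> omega W c0 \<and> mafield alpha beta k x = 0)
       \<and> (\<forall>x. x \<in> omega W c0 \<and> mafield alpha beta k x = 0 \<longrightarrow> (\<forall>i. x$i > 0))"
proof -
  have pos: "\<forall>i. x$i > 0" if "x \<in> omega W c0" "mafield alpha beta k x = 0" for x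
  proof -
    have "\<not> (\<exists>i. x$i = 0)" using no_bdry that by blast
    moreover have "\<forall>i. x$i \<ge> 0" using that(1) by (simp add: omega_def)
    ultimately show ?thesis by (metis less_eq_real_def)
  qed
  obtain x where x: "x \<in> omega W c0" "mafield alpha beta k x = 0"
    using existence[OF cons W_span k_pos nonempty] by blast
  have "\<exists>!x. x \<in> omega W c0 \<and> mafield alpha beta k x = 0"
  proof (rule ex1I[of _ x])
    show "x \<in> omega W c0 \<and> mafield alpha beta k x = 0" using x by simp
  next
    fix y assume y: "y \<in> omega W c0 \<and> mafield alpha beta k y = 0"
    show "y = x"
    proof (rule uniq[OF W_span J_im k_pos a_pos])
      show "\<forall>i. y$i > 0" using pos y by blast
      show "\<forall>i. x$i > 0" using pos x by blast
      show "transpose W *v y = transpose W *v x" using x(1) y by (simp add: omega_def)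
      show "mafield alpha beta k y = mafield alpha beta k x" using x(2) y by simp
    qed
  qed
  then show ?thesis using pos by blast
qed

end
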